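(* Let $G$ be a bipartite graph with $|V(G)|\ge 4$ such that $G-x$ is connected for every vertex $x\in V(G)$. Let $e$ be a new edge joining two distinct vertices of $G$ in the same part of the bipartition. Then $G+e$ is not strongly EFX-orientable.
   Context: All graphs are finite and simple. For a graph $G=(V,E)$ and $v\in V$, $E(v)$ is the set of edges incident to $v$. A graphical instance on $G$ assigns to each vertex $v$ a valuation $f_v:2^E\to\mathbb{R}_{\ge 0}$ that is monotone ($A\subseteq B\Rightarrow f_v(A)\le f_v(B)$) and satisfies $f_v(X)=f_v(X\cap E(v))$ for all $X\subseteq E$. An orientation of $G$ chooses for each edge one of its endpoints as its head; vertex $v$ receives the bundle $X_v$ of edges whose head is $v$. The orientation is EFX if for all $u,v\in V$ and every $g\in X_v$, $f_u(X_u)\ge f_u(X_v\setminus\{g\})$. A graph $G$ is strongly EFX-orientable if for every graphical instance on $G$ there exists an EFX orientation. *)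

theory Defs
  imports Complex_Main
begin

definition simple_graph :: "'v set \<Rightarrow> 'v set set \<Rightarrow> bool" where
  "simple_graph V E \<longleftrightarrow> finite V \<and> (\<forall>e\<in>E. e \<subseteq> V \<and> card e = 2)"

definition bipartition :: "'v set \<Rightarrow> 'v set set \<Rightarrow> 'v set \<Rightarrow> 'v set \<Rightarrow> bool" where
  "bipartition V E A B \<longleftrightarrow> A \<union> B = V \<and> A \<inter> B = {} \<and>
     (\<forall>e\<in>E. \<exists>a b. a \<in> A \<and> b \<in> B \<and> e = {a, b})"

definition bipartite :: "'v set \<Rightarrow> 'v set set \<Rightarrow> bool" where
  "bipartite V E \<longleftrightarrow> (\<exists>A B. bipartition V E A B)"

definition connected_graph :: "'v set \<Rightarrow> 'v set set \<Rightarrow> bool" where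
  "connected_graph V E \<longleftrightarrow> V \<noteq> {} \<and>
     (\<forall>x\<in>V. \<forall>y\<in>V. (x, y) \<in> {(a, b). {a, b} \<in> E \<and> a \<in> V \<and> b \<in> V}\<^sup>*)"

definition del_vertex :: "'v set set \<Rightarrow> 'v \<Rightarrow> 'v set set" where
  "del_vertex E x = {e \<in> E. x \<notin> e}"

definition incident_edges :: "'v set set \<Rightarrow> 'v \<Rightarrow> 'v set set" where
  "incident_edges E v = {e \<in> E. v \<in> e}"

definition graphical_instance :: "'v set \<Rightarrow> 'v set set \<Rightarrow> ('v \<Rightarrow> 'v set set \<Rightarrow> real) \<Rightarrow> bool" where
  "graphical_instance V E f \<longleftrightarrow>
     (\<forall>v\<in>V. (\<forall>X. X \<subseteq> E \<longrightarrow> f v X \<ge> 0)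
       \<and> (\<forall>X Y. X \<subseteq> Y \<and> Y \<subseteq> E \<longrightarrow> f v X \<le> f v Y)
       \<and> (\<forall>X. X \<subseteq> E \<longrightarrow> f v X = f v (X \<inter> incident_edges E v)))"

definition orientation :: "'v set set \<Rightarrow> ('v set \<Rightarrow> 'v) \<Rightarrow> bool" where
  "orientation E h \<longleftrightarrow> (\<forall>e\<in>E. h e \<in> e)"

definition bundle_of :: "'v set set \<Rightarrow> ('v set \<Rightarrow> 'v) \<Rightarrow> 'v \<Rightarrow> 'v set set" where
  "bundle_of E h v = {e \<in> E. h e = v}"

definition EFX_orientation :: "'v set \<Rightarrow> 'v set set \<Rightarrow> ('v \<Rightarrow> 'v set set \<Rightarrow> real) \<Rightarrow> ('v set \<Rightarrow> 'v) \<Rightarrow> bool" where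
  "EFX_orientation V E f h \<longleftrightarrow> orientation E h \<and>
     (\<forall>u\<in>V. \<forall>v\<in>V. \<forall>g\<in>bundle_of E h v. f u (bundle_of E h u) \<ge> f u (bundle_of E h v - {g}))"

definition strongly_EFX_orientable :: "'v set \<Rightarrow> 'v set set \<Rightarrow> bool" where
  "strongly_EFX_orientable V E \<longleftrightarrow>
     (\<forall>f. graphical_instance V E f \<longrightarrow> (\<exists>h. EFX_orientation V E f h))"

end

theory Submission
  imports Defs
begin


definition cyc :: "'v set set \<Rightarrow> 'v list \<Rightarrow> bool" where
  "cyc E xs \<longleftrightarrow> distinct xs \<and> 3 \<le> length xs \<and> successively (\<lambda>a b. {a,b} \<in> E) xs
     \<and> {last xs, hd xs} \<in> E"

lemma cyc_rot1:
  assumes "cyc E (a # xs)" shows "cyc E (xs @ [a])"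
proof -
  have xs: "xs \<noteq> []" using assms by (auto simp: cyc_def)
  have "successively (\<lambda>a b. {a,b} \<in> E) xs" "{last xs, a} \<in> E" "{a, hd xs} \<in> E"
    using assms xs by (auto simp: cyc_def successively_Cons)
  then show ?thesis using assms xs
    by (auto simp: cyc_def successively_append_iff insert_commute hd_append)
qed

lemma cyc_rot:
  "cyc E (pre @ qs) \<Longrightarrow> cyc E (qs @ pre)"
proof (induction pre arbitrary: qs)
  case Nil then show ?case by simp
next
  case (Cons a pre)
  have "cyc E ((pre @ qs) @ [a])" using cyc_rot1[of E a "pre @ qs"] Cons.prems by simp
  then have "cyc E (pre @ (qs @ [a]))" by simp
  then have "cyc E ((qs @ [a]) @ pre)" using Cons.IH by blast
  then show ?case by simp
qed

lemma cyc_rev: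
  assumes "cyc E xs" shows "cyc E (rev xs)"
proof -
  have "xs \<noteq> []" using assms by (auto simp: cyc_def)
  then show ?thesis using assms
    by (auto simp: cyc_def hd_rev last_rev insert_commute elim: successively_mono)
qed

lemma cyc_start:
  assumes "cyc E xs" "v \<in> set xs"
  shows "\<exists>ys. cyc E (v # ys) \<and> set (v # ys) = set xs"
proof -
  obtain pre post where "xs = pre @ v # post" using assms(2) by (meson split_list)
  then show ?thesis using cyc_rot[of E pre "v # post"] assms(1) by auto
qed




lemma successively_drop:
  "successively P xs \<Longrightarrow> successively P (drop i xs)"
  by (metis append_take_drop_id successively_append_iff)

lemma path_to_set:
  assumes "(y, t) \<in> {(a,b). {a,b} \<in> F \<and> a \<in> W \<and> b \<in> W}\<^sup>*" "t \<in> T" "y \<notin> T" "y \<in> W"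
  shows "\<exists>P. P \<noteq> [] \<and> hd P = y \<and> last P \<in> T \<and> distinct P \<and>
     successively (\<lambda>a b. {a,b} \<in> F) P \<and> set P \<subseteq> W \<and> (\<forall>z\<in>set (butlast P). z \<notin> T)"
  using assms
proof (induction rule: converse_rtrancl_induct)
  case base
  then show ?case by simp
next
  case (step y z)
  then have yz: "{y,z} \<in> F" "y \<in> W" "z \<in> W" by auto
  show ?case
  proof (cases "z \<in> T")
    case True
    then have "y \<noteq> z" using step by auto
    then show ?thesis using True yz step.prems by (intro exI[of _ "[y,z]"]) auto
  next
    case False
    then obtain P where P: "P \<noteq> []" "hd P = z" "last P \<in> T" "distinct P"
      "successively (\<lambda>a b. {a,b} \<in> F) P" "set P \<subseteq> W" "\<forall>z\<in>set (butlast P). z \<notin> T"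
      using step.IH step.prems yz by blast
    show ?thesis
    proof (cases "y \<in> set P")
      case True
      then obtain i where i: "i < length P" "P ! i = y" by (meson in_set_conv_nth)
      define Q where "Q = drop i P"
      have "Q \<noteq> []" using i by (simp add: Q_def)
      moreover have "hd Q = y" using i by (simp add: Q_def hd_drop_conv_nth)
      moreover have "last Q = last P" using i by (simp add: Q_def)
      moreover have "distinct Q" using P by (simp add: Q_def)
      moreover have "successively (\<lambda>a b. {a,b} \<in> F) Q" using P by (simp add: Q_def successively_drop)
      moreover have "set Q \<subseteq> W" using P set_drop_subset[of i P] by (auto simp: Q_def)
      moreover have "set (butlast Q) \<subseteq> set (butlast P)"
        by (simp add: Q_def butlast_drop set_drop_subset)
      ultimately show ?thesis using P by (intro exI[of _ Q]) auto
    next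
      case False
      have "successively (\<lambda>a b. {a,b} \<in> F) (y # P)" using P yz by (simp add: successively_Cons)
      moreover have "butlast (y # P) = y # butlast P" using P by simp
      ultimately show ?thesis using P False yz step.prems
        by (intro exI[of _ "y # P"]) auto
    qed
  qed
qed




lemma cyc_extend:
  assumes c: "cyc E (v # ys @ x # zs)"
    and P: "P \<noteq> []" "hd P = w" "last P = x" "distinct P" "successively (\<lambda>a b. {a,b} \<in> E) P"
      "set (butlast P) \<inter> set (v # ys @ x # zs) = {}"
    and w: "w \<notin> set (v # ys @ x # zs)" and vw: "{v, w} \<in> E"
  shows "cyc E (P @ rev ys @ [v])"
proof -
  have P2: "2 \<le> length P"
  proof (rule ccontr)
    assume "\<not> 2 \<le> length P"
    moreover have "length P \<noteq> 0" using P(1) by simp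
    ultimately have "length P = 1" by linarith
    then have "hd P = last P" by (cases P) auto
    then show False using P w by simp
  qed
  have Psplit: "P = butlast P @ [x]" using P by (metis append_butlast_last_id)
  have dc: "distinct (v # ys @ x # zs)" using c by (simp add: cyc_def)
  have sc: "successively (\<lambda>a b. {a,b} \<in> E) (v # ys @ x # zs)" using c by (simp add: cyc_def)
  have s1: "successively (\<lambda>a b. {a,b} \<in> E) (v # ys @ [x])"
    using sc successively_append_iff[of _ "v # ys @ [x]" zs] by simp
  then have s2: "successively (\<lambda>a b. {a,b} \<in> E) (x # rev ys @ [v])"
  proof -
    have "successively (\<lambda>a b. {a,b} \<in> E) (rev (v # ys @ [x]))"
    proof (rule successively_rev[THEN iffD2])
      show "successively (\<lambda>a b. {b, a} \<in> E) (v # ys @ [x])"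
        using s1 by (simp add: insert_commute)
    qed
    then show ?thesis by simp
  qed
  have dist: "distinct (P @ rev ys @ [v])"
  proof -
    have "set P \<inter> set (rev ys @ [v]) = {}"
    proof -
      have "set P = set (butlast P) \<union> {x}" using Psplit by (metis Un_insert_right empty_set list.simps(15) set_append sup_bot.right_neutral)
      then show ?thesis using P(6) dc by auto
    qed
    then show ?thesis using P(4) dc by auto
  qed
  have succ: "successively (\<lambda>a b. {a,b} \<in> E) (P @ rev ys @ [v])"
  proof -
    have eq: "P @ rev ys @ [v] = butlast P @ (x # rev ys @ [v])" using Psplit by (metis append.assoc append_Cons append_Nil)
    have a: "successively (\<lambda>a b. {a,b} \<in> E) (butlast P @ [x])" using P(5) Psplit by metis
    then have b1: "successively (\<lambda>a b. {a,b} \<in> E) (butlast P)"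
      and b2: "butlast P = [] \<or> {last (butlast P), x} \<in> E"
      using successively_append_iff[of _ "butlast P" "[x]"] by auto
    show ?thesis unfolding eq
      by (rule successively_append_iff[THEN iffD2]) (use b1 b2 s2 in auto)
  qed
  have "hd (P @ rev ys @ [v]) = w" using P by simp
  moreover have "last (P @ rev ys @ [v]) = v" by simp
  ultimately show ?thesis using dist succ P2 vw
    by (auto simp: cyc_def insert_commute)
qed

lemma cyc_extend2:
  assumes c: "cyc E (v # ys @ x # zs)"
    and P: "P \<noteq> []" "hd P = w" "last P = x" "distinct P" "successively (\<lambda>a b. {a,b} \<in> E) P"
      "set (butlast P) \<inter> set (v # ys @ x # zs) = {}"
    and w: "w \<notin> set (v # ys @ x # zs)" and vw: "{v, w} \<in> E"
    and u: "u \<in> set (v # ys @ x # zs)"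
  shows "\<exists>cs. cyc E cs \<and> u \<in> set cs \<and> w \<in> set cs \<and> set cs \<subseteq> set P \<union> set (v # ys @ x # zs)"
proof (cases "u \<in> set zs")
  case False
  then have "u \<in> set (P @ rev ys @ [v])" using u P last_in_set[of P] by auto
  moreover have "w \<in> set (P @ rev ys @ [v])" using P by (auto simp: hd_in_set)
  ultimately show ?thesis using cyc_extend[OF assms(1-9)] by (intro exI[of _ "P @ rev ys @ [v]"]) auto
next
  case True
  have "cyc E (rev (v # ys @ x # zs))" using c cyc_rev by blast
  then have "cyc E ((rev zs @ x # rev ys) @ [v])" by simp
  then have c2: "cyc E (v # rev zs @ x # rev ys)" using cyc_rot[of E "rev zs @ x # rev ys" "[v]"] by simp
  have eqs: "set (v # rev zs @ x # rev ys) = set (v # ys @ x # zs)" by auto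
  have "cyc E (P @ rev (rev zs) @ [v])"
    by (rule cyc_extend[OF c2 P(1-5)]) (use P(6) w vw eqs in auto)
  moreover have "u \<in> set (P @ rev (rev zs) @ [v])" "w \<in> set (P @ rev (rev zs) @ [v])"
    using True P by (auto simp: hd_in_set)
  ultimately show ?thesis by (intro exI[of _ "P @ rev (rev zs) @ [v]"]) auto
qed




abbreviation Rx :: "'v set \<Rightarrow> 'v set set \<Rightarrow> 'v \<Rightarrow> ('v \<times> 'v) set" where
  "Rx V E x \<equiv> {(a, b). {a, b} \<in> del_vertex E x \<and> a \<in> V - {x} \<and> b \<in> V - {x}}"

lemma conn_x:
  assumes "\<forall>x\<in>V. connected_graph (V - {x}) (del_vertex E x)" "x \<in> V" "y \<in> V - {x}" "z \<in> V - {x}"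
  shows "(y, z) \<in> (Rx V E x)\<^sup>*"
  using assms unfolding connected_graph_def by blast

lemma edge_neq:
  assumes "simple_graph V E" "{a, b} \<in> E" shows "a \<noteq> b" "a \<in> V" "b \<in> V"
proof -
  have "{a, b} \<subseteq> V" "card {a, b} = 2" using assms unfolding simple_graph_def by blast+
  then show "a \<noteq> b" "a \<in> V" "b \<in> V" by (force, blast, blast)
qed

lemma third_vertex:
  assumes "finite V" "card V \<ge> 4" shows "\<exists>t\<in>V. t \<noteq> x \<and> t \<noteq> y"
proof (rule ccontr)
  assume "\<not> ?thesis"
  then have "V \<subseteq> {x, y}" by auto
  then have "card V \<le> card {x, y}" by (rule card_mono[rotated]) simp
  also have "\<dots> \<le> 2" by (simp add: card_insert_if)
  finally show False using assms by simp
qed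

lemma neighbor:
  assumes g: "simple_graph V E" "card V \<ge> 4" "\<forall>x\<in>V. connected_graph (V - {x}) (del_vertex E x)"
    and "x \<in> V" "y \<in> V" "x \<noteq> y"
  shows "\<exists>z. {y, z} \<in> E \<and> z \<noteq> x"
proof -
  have fin: "finite V" using g by (simp add: simple_graph_def)
  obtain t where t: "t \<in> V" "t \<noteq> x" "t \<noteq> y" using third_vertex[OF fin g(2)] by blast
  have "(y, t) \<in> (Rx V E x)\<^sup>*" using conn_x[OF g(3)] assms t by blast
  then show ?thesis using t(3)
    by (cases rule: converse_rtranclE) (auto simp: del_vertex_def)
qed

lemma base_cycle:
  assumes g: "simple_graph V E" "card V \<ge> 4" "\<forall>x\<in>V. connected_graph (V - {x}) (del_vertex E x)"
    and u: "u \<in> V"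
  shows "\<exists>cs. cyc E cs \<and> u \<in> set cs \<and> set cs \<subseteq> V"
proof -
  have fin: "finite V" using g by (simp add: simple_graph_def)
  obtain x where x: "x \<in> V" "x \<noteq> u" using third_vertex[OF fin g(2)] by blast
  obtain a where a: "{u, a} \<in> E" using neighbor[OF g x(1) u] x by blast
  have aV: "a \<in> V" "a \<noteq> u" using edge_neq[OF g(1) a] by auto
  obtain b where b: "{u, b} \<in> E" "b \<noteq> a" using neighbor[OF g aV(1) u] aV by metis
  have bV: "b \<in> V" "b \<noteq> u" using edge_neq[OF g(1) b(1)] by auto
  have "(a, b) \<in> (Rx V E u)\<^sup>*" using conn_x[OF g(3) u] aV bV by blast
  from path_to_set[OF this, of "{b}"] obtain P where P: "P \<noteq> []" "hd P = a" "last P \<in> {b}" "distinct P"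
    "successively (\<lambda>x y. {x, y} \<in> del_vertex E u) P" "set P \<subseteq> V - {u}"
    using b aV by auto
  have sP: "successively (\<lambda>x y. {x, y} \<in> E) P"
    using P(5) by (rule successively_mono) (auto simp: del_vertex_def)
  have len: "2 \<le> length P"
  proof (rule ccontr)
    assume "\<not> 2 \<le> length P"
    moreover have "length P \<noteq> 0" using P(1) by simp
    ultimately have "length P = 1" by linarith
    then have "hd P = last P" by (cases P) auto
    then show False using P b by simp
  qed
  have lb: "last P = b" using P(3) by simp
  have uP: "u \<notin> set P" using P(6) by auto
  have s2: "successively (\<lambda>x y. {x, y} \<in> E) (P @ [u])"
    using sP P(1) lb b(1) by (simp add: successively_append_iff insert_commute)
  have h2: "hd (P @ [u]) = a" using P by simp
  have "cyc E (P @ [u])"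
    unfolding cyc_def using P(4) uP s2 len h2 a by (simp add: insert_commute)
  then show ?thesis using P u by (intro exI[of _ "P @ [u]"]) auto
qed

lemma step_cycle:
  assumes g: "simple_graph V E" "card V \<ge> 4" "\<forall>x\<in>V. connected_graph (V - {x}) (del_vertex E x)"
    and c: "cyc E cs" "u \<in> set cs" "v \<in> set cs" "set cs \<subseteq> V" and vw: "{v, w} \<in> E"
  shows "\<exists>cs. cyc E cs \<and> u \<in> set cs \<and> w \<in> set cs \<and> set cs \<subseteq> V"
proof (cases "w \<in> set cs")
  case True then show ?thesis using c by blast
next
  case False
  obtain rest where r: "cyc E (v # rest)" "set (v # rest) = set cs" using cyc_start[OF c(1,3)] by blast
  have "3 \<le> length (v # rest)" using r by (simp add: cyc_def)
  then obtain t where t: "t \<in> set rest" by (cases rest) auto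
  have dv: "distinct (v # rest)" using r by (simp add: cyc_def)
  have vV: "v \<in> V" using c by auto
  have wV: "w \<in> V" "w \<noteq> v" using edge_neq[OF g(1) vw] by auto
  have tV: "t \<in> V - {v}" using t dv r c by auto
  have "(w, t) \<in> (Rx V E v)\<^sup>*" using conn_x[OF g(3) vV] wV tV by blast
  from path_to_set[OF this, of "set rest"] obtain P where P: "P \<noteq> []" "hd P = w" "last P \<in> set rest" "distinct P"
    "successively (\<lambda>x y. {x, y} \<in> del_vertex E v) P" "set P \<subseteq> V - {v}" "\<forall>z\<in>set (butlast P). z \<notin> set rest"
    using t wV False r by auto
  have sP: "successively (\<lambda>x y. {x, y} \<in> E) P"
    using P(5) by (rule successively_mono) (auto simp: del_vertex_def)
  obtain ys zs where yz: "rest = ys @ last P # zs" using P(3) by (meson split_list)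
  have vP: "v \<notin> set (butlast P)" using P(6) in_set_butlastD by fastforce
  have dis: "set (butlast P) \<inter> set (v # ys @ last P # zs) = {}" using P(7) vP yz by auto
  have "\<exists>cs. cyc E cs \<and> u \<in> set cs \<and> w \<in> set cs \<and> set cs \<subseteq> set P \<union> set (v # ys @ last P # zs)"
  proof (rule cyc_extend2[of E v ys "last P" zs P w])
    show "cyc E (v # ys @ last P # zs)" using r(1) yz by simp
    show "w \<notin> set (v # ys @ last P # zs)" using False r(2) yz by simp
    show "u \<in> set (v # ys @ last P # zs)" using c(2) r(2) yz by simp
  qed (use P sP dis vw in auto)
  then obtain cs' where cs': "cyc E cs'" "u \<in> set cs'" "w \<in> set cs'"
    "set cs' \<subseteq> set P \<union> set (v # ys @ last P # zs)" by blast
  have "set P \<union> set (v # ys @ last P # zs) \<subseteq> V" using P(6) r(2) yz c(4) by auto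
  then show ?thesis using cs' by blast
qed

lemma cycle_through:
  assumes g: "simple_graph V E" "card V \<ge> 4" "\<forall>x\<in>V. connected_graph (V - {x}) (del_vertex E x)"
    and u: "u \<in> V" and w: "w \<in> V"
  shows "\<exists>cs. cyc E cs \<and> u \<in> set cs \<and> w \<in> set cs \<and> set cs \<subseteq> V"
proof -
  have fin: "finite V" using g by (simp add: simple_graph_def)
  obtain x where x: "x \<in> V" "x \<noteq> u" "x \<noteq> w" using third_vertex[OF fin g(2)] by blast
  have "(u, w) \<in> (Rx V E x)\<^sup>*" using conn_x[OF g(3) x(1)] x u w by blast
  moreover have "(Rx V E x)\<^sup>* \<subseteq> {(a, b). {a, b} \<in> E}\<^sup>*"
    by (rule rtrancl_mono) (auto simp: del_vertex_def)
  ultimately have "(u, w) \<in> {(a, b). {a, b} \<in> E}\<^sup>*" by blast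
  then show ?thesis
  proof (induction rule: rtrancl_induct)
    case base
    then show ?case using base_cycle[OF g u] by blast
  next
    case (step y z)
    then obtain cs where "cyc E cs" "u \<in> set cs" "y \<in> set cs" "set cs \<subseteq> V" by blast
    then show ?case using step_cycle[OF g] step(2) by blast
  qed
qed




definition gE :: "(nat \<Rightarrow> 'v) \<Rightarrow> nat \<Rightarrow> 'v set" where
  "gE c k = {c (2*k), c (Suc (2*k))}"

definition fval :: "(nat \<Rightarrow> 'v) \<Rightarrow> nat \<Rightarrow> 'v set \<Rightarrow> 'v \<Rightarrow> 'v set set \<Rightarrow> real" where
  "fval c j e x S = (if \<exists>g\<in>S. g \<in> range (gE c) \<and> x \<in> g then 3
      else if (x = c 0 \<or> x = c (2*j)) \<and> e \<in> S then 2 else 0)"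

locale core =
  fixes c :: "nat \<Rightarrow> 'v" and K j :: nat and V :: "'v set" and E' :: "'v set set" and e :: "'v set"
    and h :: "'v set \<Rightarrow> 'v"
  assumes K2: "2 \<le> K"
    and cinj: "\<And>a b. c a = c b \<longleftrightarrow> int (2*K) dvd (int a - int b)"
    and cedge: "\<And>i. {c i, c (Suc i)} \<in> E'"
    and cV: "\<And>i. c i \<in> V"
    and eE: "e \<in> E'" and edef: "e = {c 0, c (2*j)}" and j: "0 < j" "j < K"
    and enot: "\<And>i. e \<noteq> {c i, c (Suc i)}"
    and efx: "EFX_orientation V E' (fval c j e) h"
begin

abbreviation bnd :: "'v \<Rightarrow> 'v set set" where "bnd x \<equiv> bundle_of E' h x"
abbreviation f :: "'v \<Rightarrow> 'v set set \<Rightarrow> real" where "f \<equiv> fval c j e"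

lemma orient: "g \<in> E' \<Longrightarrow> h g \<in> g"
  using efx by (auto simp: EFX_orientation_def orientation_def)

lemma efx_ineq: "x \<in> V \<Longrightarrow> y \<in> V \<Longrightarrow> g \<in> bnd y \<Longrightarrow> f x (bnd x) \<ge> f x (bnd y - {g})"
  using efx by (auto simp: EFX_orientation_def)

lemma in_bnd: "g \<in> bnd y \<longleftrightarrow> g \<in> E' \<and> h g = y"
  by (simp add: bundle_of_def)

lemma neq_simple: "c a \<noteq> c b" if "\<not> int (2*K) dvd (int a - int b)"
  using that cinj by blast

lemma c_odd_even: "c (Suc (2*k)) \<noteq> c (2*l)"
proof -
  have "\<not> int (2*K) dvd (int (Suc (2*k)) - int (2*l))"
  proof
    assume "int (2*K) dvd (int (Suc (2*k)) - int (2*l))"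
    then have "2 dvd (int (Suc (2*k)) - int (2*l))" by (metis dvd_mult_left of_nat_mult of_nat_numeral)
    then show False by presburger
  qed
  then show ?thesis using cinj by blast
qed

lemma gE_uniq1: "c (2*a) \<in> gE c l \<Longrightarrow> gE c l = gE c a"
proof -
  assume "c (2*a) \<in> gE c l"
  then have "c (2*a) = c (2*l)" using c_odd_even[of l a] by (auto simp: gE_def)
  then have d: "int (2*K) dvd (int (2*a) - int (2*l))" using cinj by blast
  then have "int (2*K) dvd (int (Suc (2*a)) - int (Suc (2*l)))" by simp
  then have "c (Suc (2*a)) = c (Suc (2*l))" using cinj by blast
  then show ?thesis using \<open>c (2*a) = c (2*l)\<close> by (simp add: gE_def)
qed

lemma gE_uniq2: "c (Suc (2*a)) \<in> gE c l \<Longrightarrow> gE c l = gE c a"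
proof -
  assume "c (Suc (2*a)) \<in> gE c l"
  then have "c (Suc (2*a)) = c (Suc (2*l))" using c_odd_even[of a l] by (auto simp: gE_def)
  then have d: "int (2*K) dvd (int (Suc (2*a)) - int (Suc (2*l)))" using cinj by blast
  then have "int (2*K) dvd (int (2*a) - int (2*l))" by simp
  then have "c (2*a) = c (2*l)" using cinj by blast
  then show ?thesis using \<open>c (Suc (2*a)) = c (Suc (2*l))\<close> by (simp add: gE_def)
qed

lemma gE_in: "gE c k \<in> E'" using cedge[of "2*k"] by (simp add: gE_def)

lemma c_ne_succ: "c (Suc i) \<noteq> c i"
proof -
  have "\<not> int (2*K) dvd (int (Suc i) - int i)" using K2 by (simp add: zdvd_not_zless)
  then show ?thesis using cinj by blast
qed

lemma c_ne_2: "c (Suc (Suc i)) \<noteq> c i"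
proof -
  have "\<not> int (2*K) dvd (int (Suc (Suc i)) - int i)"
  proof
    assume "int (2*K) dvd (int (Suc (Suc i)) - int i)"
    then have "int (2*K) dvd 2" by simp
    then have "int (2*K) \<le> 2" by (rule zdvd_imp_le) simp
    then show False using K2 by simp
  qed
  then show ?thesis using cinj by blast
qed

definition H :: "nat \<Rightarrow> bool" where "H k \<longleftrightarrow> h (gE c k) = c (Suc (2*k))"

lemma notH: "\<not> H k \<Longrightarrow> h (gE c k) = c (2*k)"
  using orient[OF gE_in[of k]] by (auto simp: H_def gE_def)

lemma f_lt3_even: "h (gE c a) \<noteq> c (2*a) \<Longrightarrow> f (c (2*a)) (bnd (c (2*a))) < 3"
proof -
  assume nh: "h (gE c a) \<noteq> c (2*a)"
  have "\<not> (\<exists>g\<in>bnd (c (2*a)). g \<in> range (gE c) \<and> c (2*a) \<in> g)"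
  proof
    assume "\<exists>g\<in>bnd (c (2*a)). g \<in> range (gE c) \<and> c (2*a) \<in> g"
    then obtain l where "gE c l \<in> bnd (c (2*a))" "c (2*a) \<in> gE c l" by blast
    then show False using gE_uniq1 nh in_bnd by metis
  qed
  then show ?thesis by (simp add: fval_def)
qed

lemma f_lt3_odd: "h (gE c a) \<noteq> c (Suc (2*a)) \<Longrightarrow> f (c (Suc (2*a))) (bnd (c (Suc (2*a)))) < 3"
proof -
  assume nh: "h (gE c a) \<noteq> c (Suc (2*a))"
  have "\<not> (\<exists>g\<in>bnd (c (Suc (2*a))). g \<in> range (gE c) \<and> c (Suc (2*a)) \<in> g)"
  proof
    assume "\<exists>g\<in>bnd (c (Suc (2*a))). g \<in> range (gE c) \<and> c (Suc (2*a)) \<in> g"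
    then obtain l where "gE c l \<in> bnd (c (Suc (2*a)))" "c (Suc (2*a)) \<in> gE c l" by blast
    then show False using gE_uniq2 nh in_bnd by metis
  qed
  then show ?thesis by (simp add: fval_def)
qed

lemma f3: "x \<in> gE c k \<Longrightarrow> gE c k \<in> S \<Longrightarrow> f x S = 3"
  by (auto simp: fval_def)

lemma gE_V: "x \<in> gE c k \<Longrightarrow> x \<in> V" using cV by (auto simp: gE_def)

lemma holder_single:
  assumes hy: "h (gE c k) = y" and x: "x \<in> gE c k" "x \<noteq> y"
    and lt: "f x (bnd x) < 3"
  shows "bnd y = {gE c k}"
proof -
  have yin: "gE c k \<in> bnd y" using hy gE_in[of k] by (simp add: in_bnd)
  have xV: "x \<in> V" using x(1) by (rule gE_V)
  have "y \<in> gE c k" using orient[OF gE_in[of k]] hy by simp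
  then have yV: "y \<in> V" by (rule gE_V)
  have "g = gE c k" if g: "g \<in> bnd y" for g
  proof (rule ccontr)
    assume ne: "g \<noteq> gE c k"
    have "f x (bnd x) \<ge> f x (bnd y - {g})" using efx_ineq[OF xV yV g] by blast
    moreover have "gE c k \<in> bnd y - {g}" using yin ne by simp
    then have "f x (bnd y - {g}) = 3" by (rule f3[OF x(1)])
    ultimately show False using lt by simp
  qed
  then show ?thesis using yin by blast
qed

lemma H_single: assumes "H k" shows "bnd (c (Suc (2*k))) = {gE c k}"
proof -
  have hy: "h (gE c k) = c (Suc (2*k))" using assms by (simp add: H_def)
  have ne: "c (2*k) \<noteq> c (Suc (2*k))" using c_ne_succ[of "2*k"] by metis
  have "f (c (2*k)) (bnd (c (2*k))) < 3" using f_lt3_even[of k] hy ne by metis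
  moreover have "c (2*k) \<in> gE c k" by (simp add: gE_def)
  ultimately show ?thesis using holder_single[OF hy _ ne] by blast
qed

lemma notH_single: assumes "\<not> H k" shows "bnd (c (2*k)) = {gE c k}"
proof -
  have hy: "h (gE c k) = c (2*k)" using notH[OF assms] .
  have ne: "c (Suc (2*k)) \<noteq> c (2*k)" using c_ne_succ[of "2*k"] by metis
  have "f (c (Suc (2*k))) (bnd (c (Suc (2*k)))) < 3" using f_lt3_odd[of k] hy ne by metis
  moreover have "c (Suc (2*k)) \<in> gE c k" by (simp add: gE_def)
  ultimately show ?thesis using holder_single[OF hy _ ne] by blast
qed

lemma link_held: assumes "H k" shows "h {c (Suc (2*k)), c (Suc (Suc (2*k)))} = c (Suc (Suc (2*k)))"
proof -
  let ?l = "{c (Suc (2*k)), c (Suc (Suc (2*k)))}"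
  have lin: "?l \<in> E'" using cedge by blast
  have "?l \<noteq> gE c k"
  proof
    assume "?l = gE c k"
    then have "c (Suc (Suc (2*k))) \<in> {c (2*k), c (Suc (2*k))}" by (auto simp: gE_def)
    then show False using c_ne_2[of "2*k"] c_ne_succ[of "Suc (2*k)"] by auto
  qed
  then have "h ?l \<noteq> c (Suc (2*k))"
  proof -
    assume nl: "?l \<noteq> gE c k"
    show ?thesis
    proof
      assume "h ?l = c (Suc (2*k))"
      then have "?l \<in> bnd (c (Suc (2*k)))" using lin by (simp add: in_bnd)
      then show False using H_single[OF assms] nl by simp
    qed
  qed
  then show ?thesis using orient[OF lin] by auto
qed

lemma H_Suc: assumes "H k" shows "H (Suc k)"
proof (rule ccontr)
  assume n: "\<not> H (Suc k)"
  let ?l = "{c (Suc (2*k)), c (Suc (Suc (2*k)))}"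
  have "?l \<in> bnd (c (2 * Suc k))" using link_held[OF assms] cedge in_bnd by simp
  then have "?l = gE c (Suc k)" using notH_single[OF n] by blast
  then have "c (Suc (2*k)) \<in> {c (Suc (Suc (2*k))), c (Suc (Suc (Suc (2*k))))}" by (auto simp: gE_def)
  then show False using c_ne_succ[of "Suc (2*k)"] c_ne_2[of "Suc (2*k)"] by auto
qed

lemma H_add: "H k \<Longrightarrow> H (k + t)"
  by (induction t) (auto intro: H_Suc)

lemma gE_period: "gE c (k + K) = gE c k"
proof -
  have a: "c (2*(k+K)) = c (2*k)" using cinj by (simp add: algebra_simps)
  have b: "c (Suc (2*(k+K))) = c (Suc (2*k))" using cinj by (simp add: algebra_simps)
  show ?thesis using a b by (simp add: gE_def)
qed

lemma H_period: "H (k + K) = H k"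
proof -
  have "c (Suc (2*(k+K))) = c (Suc (2*k))" using cinj by (simp add: algebra_simps)
  then show ?thesis using gE_period by (simp add: H_def)
qed

lemma f_zero: assumes "H a" "h e \<noteq> c (2*a)" shows "f (c (2*a)) (bnd (c (2*a))) = 0"
proof -
  have nh: "h (gE c a) \<noteq> c (2*a)" using assms(1) c_ne_succ[of "2*a"] by (simp add: H_def)
  have "\<not> (\<exists>g\<in>bnd (c (2*a)). g \<in> range (gE c) \<and> c (2*a) \<in> g)"
  proof
    assume "\<exists>g\<in>bnd (c (2*a)). g \<in> range (gE c) \<and> c (2*a) \<in> g"
    then obtain l where "gE c l \<in> bnd (c (2*a))" "c (2*a) \<in> gE c l" by blast
    then show False using gE_uniq1 nh in_bnd by metis
  qed
  moreover have "e \<notin> bnd (c (2*a))" using assms(2) by (simp add: in_bnd)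
  ultimately show ?thesis by (simp add: fval_def)
qed

lemma f_two: "(x = c 0 \<or> x = c (2*j)) \<Longrightarrow> e \<in> S \<Longrightarrow> f x S \<ge> 2"
  by (simp add: fval_def)

lemma e_not_g: "e \<noteq> gE c k"
  using enot[of "2*k"] by (simp add: gE_def)

lemma contradiction: False
proof (cases "H 0")
  case False
  have Hj: "\<not> H j"
  proof
    assume "H j"
    then have "H (j + (K - j))" by (rule H_add)
    then have "H (0 + K)" using j by simp
    then show False using False H_period by blast
  qed
  have he: "h e \<in> {c 0, c (2*j)}" using orient[OF eE] edef by simp
  then show False
  proof
    assume "h e = c 0"
    then have "e \<in> bnd (c (2*0))" using eE in_bnd by simp
    then show False using notH_single[OF False] e_not_g by blast
  next
    assume "h e \<in> {c (2*j)}"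
    then have "e \<in> bnd (c (2*j))" using eE in_bnd by simp
    then show False using notH_single[OF Hj] e_not_g by blast
  qed
next
  case True
  have Hj: "H j" using H_add[OF True, of j] by simp
  have Hj1: "H (j - 1)" using H_add[OF True, of "j - 1"] by simp
  have HK1: "H (K - 1)" using H_add[OF True, of "K - 1"] by simp
  have he: "h e \<in> {c 0, c (2*j)}" using orient[OF eE] edef by simp
  have cK: "c (2*K) = c 0" using cinj by simp
  then show False
  proof (cases "h e = c 0")
    case True
    let ?l = "{c (Suc (2*(K-1))), c (Suc (Suc (2*(K-1))))}"
    have eq2: "Suc (Suc (2*(K-1))) = 2*K" using K2 by simp
    have lh: "h ?l = c 0" using link_held[OF HK1] eq2 cK by simp
    have lin: "?l \<in> bnd (c 0)" using lh cedge by (simp add: in_bnd)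
    have ne: "?l \<noteq> e" using enot by metis
    have "f (c (2*j)) (bnd (c (2*j))) \<ge> f (c (2*j)) (bnd (c 0) - {?l})"
      using efx_ineq[OF cV cV lin] by blast
    moreover have "e \<in> bnd (c 0) - {?l}" using ne True eE by (simp add: in_bnd)
    then have "f (c (2*j)) (bnd (c 0) - {?l}) \<ge> 2" by (intro f_two) simp_all
    moreover have "c 0 \<noteq> c (2*j)"
    proof
      assume "c 0 = c (2*j)"
      then have "int (2*K) dvd (int 0 - int (2*j))" using cinj by blast
      then have "int (2*K) dvd int (2*j)" by simp
      then have "int (2*K) \<le> int (2*j)" by (rule zdvd_imp_le) (use j in simp)
      then show False using j by simp
    qed
    then have "f (c (2*j)) (bnd (c (2*j))) = 0"
      using f_zero[OF Hj] True by simp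
    ultimately show False by simp
  next
    case False
    then have hw: "h e = c (2*j)" using he by simp
    let ?l = "{c (Suc (2*(j-1))), c (Suc (Suc (2*(j-1))))}"
    have eq2: "Suc (Suc (2*(j-1))) = 2*j" using j by simp
    have lh: "h ?l = c (2*j)" using link_held[OF Hj1] eq2 by simp
    have lin: "?l \<in> bnd (c (2*j))" using lh cedge by (simp add: in_bnd)
    have ne: "?l \<noteq> e" using enot by metis
    have "f (c 0) (bnd (c 0)) \<ge> f (c 0) (bnd (c (2*j)) - {?l})"
      using efx_ineq[OF cV cV lin] by blast
    moreover have "e \<in> bnd (c (2*j)) - {?l}" using ne hw eE by (simp add: in_bnd)
    then have "f (c 0) (bnd (c (2*j)) - {?l}) \<ge> 2" by (intro f_two) simp_all
    moreover have "f (c 0) (bnd (c 0)) = 0"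
      using f_zero[OF True] False by simp
    ultimately show False by simp
  qed
qed

end



lemma side_edge:
  assumes "bipartition V E A B" "{a, b} \<in> E"
  shows "(a \<in> A) \<noteq> (b \<in> A)"
proof -
  obtain a' b' where ab: "a' \<in> A" "b' \<in> B" "{a, b} = {a', b'}" and dj: "A \<inter> B = {}"
    using assms unfolding bipartition_def by blast
  then have "(a = a' \<and> b = b') \<or> (a = b' \<and> b = a')" by (simp add: doubleton_eq_iff)
  then show ?thesis using ab dj by blast
qed

theorem mainTheorem14:
  fixes V :: "'v set" and E :: "'v set set" and A B :: "'v set" and u w :: 'v
  assumes "simple_graph V E"
    and "bipartition V E A B"
    and "card V \<ge> 4"
    and "\<forall>x\<in>V. connected_graph (V - {x}) (del_vertex E x)"
    and "u \<in> V" and "w \<in> V" and "u \<noteq> w"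
    and "(u \<in> A \<and> w \<in> A) \<or> (u \<in> B \<and> w \<in> B)"
  shows "\<not> strongly_EFX_orientable V (insert {u, w} E)"
proof
  assume strong: "strongly_EFX_orientable V (insert {u, w} E)"
  define e where "e = {u, w}"
  define E' where "E' = insert e E"
  have dj: "A \<inter> B = {}" using assms(2) by (simp add: bipartition_def)
  have suw: "(u \<in> A) = (w \<in> A)" using assms(8) dj by blast
  have eE: "e \<notin> E" using side_edge[OF assms(2)] suw by (auto simp: e_def)
  obtain cs where cs: "cyc E cs" "u \<in> set cs" "w \<in> set cs" "set cs \<subseteq> V"
    using cycle_through[OF assms(1,3,4,5,6)] by blast
  define L where "L = length cs"
  have L3: "3 \<le> L" and dcs: "distinct cs" using cs(1) by (auto simp: cyc_def L_def)
  obtain p where p: "p < L" "cs ! p = u" using cs(2) by (metis L_def in_set_conv_nth)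
  obtain q where q: "q < L" "cs ! q = w" using cs(3) by (metis L_def in_set_conv_nth)
  define c where "c i = cs ! ((p + i) mod L)" for i
  have Lpos: "0 < L" using L3 by simp
  have cV: "c i \<in> V" for i using cs(4) Lpos by (auto simp: c_def L_def)
  have cedge: "{c i, c (Suc i)} \<in> E" for i
  proof -
    let ?k = "(p + i) mod L"
    have k: "?k < L" using Lpos by simp
    have sk: "(p + Suc i) mod L = Suc ?k mod L" by (simp add: mod_Suc_eq)
    show ?thesis
    proof (cases "Suc ?k < L")
      case True
      then have "{cs ! ?k, cs ! Suc ?k} \<in> E"
        using cs(1) successively_nth[of "\<lambda>a b. {a,b} \<in> E" cs ?k] by (auto simp: cyc_def L_def)
      then show ?thesis using True sk by (simp add: c_def)
    next
      case False
      then have k1: "Suc ?k = L" using k by simp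
      then have "(p + Suc i) mod L = 0" using sk by simp
      moreover have "?k = L - 1" using k1 by simp
      then have "cs ! ?k = last cs" using Lpos by (simp add: L_def last_conv_nth)
      moreover have "cs ! 0 = hd cs" using Lpos by (simp add: L_def hd_conv_nth)
      ultimately show ?thesis using cs(1) by (simp add: c_def cyc_def)
    qed
  qed
  have cinjL: "c a = c b \<longleftrightarrow> int L dvd (int a - int b)" for a b
  proof -
    have "c a = c b \<longleftrightarrow> (p + a) mod L = (p + b) mod L"
      using dcs Lpos by (simp add: c_def nth_eq_iff_index_eq L_def)
    also have "\<dots> \<longleftrightarrow> int ((p + a) mod L) = int ((p + b) mod L)" by simp
    also have "\<dots> \<longleftrightarrow> int (p + a) mod int L = int (p + b) mod int L" by (simp only: zmod_int)
    also have "\<dots> \<longleftrightarrow> int L dvd (int (p + a) - int (p + b))" by (rule mod_eq_dvd_iff)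
    also have "\<dots> \<longleftrightarrow> int L dvd (int a - int b)" by simp
    finally show ?thesis .
  qed
  have c0: "c 0 = u" using p by (simp add: c_def)
  have side: "(c i \<in> A) = ((u \<in> A) = even i)" for i
  proof (induction i)
    case 0 then show ?case using c0 by simp
  next
    case (Suc i) then show ?case using side_edge[OF assms(2) cedge[of i]] by auto
  qed
  have "c L = c 0" using cinjL by simp
  then have "(u \<in> A) = ((u \<in> A) = even L)" using side[of L] c0 by simp
  then have evL: "even L" by blast
  define K where "K = L div 2"
  have LK: "L = 2 * K" using evL by (simp add: K_def)
  have K2: "2 \<le> K" using L3 LK evL by simp
  define t where "t = (q + L - p) mod L"
  have tL: "t < L" using Lpos by (simp add: t_def)
  have ct: "c t = w"
  proof -
    have "(p + t) mod L = (p + (q + L - p)) mod L" by (simp add: t_def mod_add_right_eq)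
    also have "p + (q + L - p) = q + L" using p by simp
    finally have "(p + t) mod L = q" using q by simp
    then show ?thesis using q by (simp add: c_def)
  qed
  have t0: "t \<noteq> 0"
  proof
    assume "t = 0" then have "w = u" using ct c0 by simp
    then show False using assms(7) by simp
  qed
  have "(w \<in> A) = ((w \<in> A) = even t)" using side[of t] ct suw by simp
  then have evt: "even t" by blast
  define j where "j = t div 2"
  have tj: "t = 2 * j" using evt by (simp add: j_def)
  have j: "0 < j" "j < K" using t0 tj tL LK by auto
  have edef: "e = {c 0, c (2*j)}" using c0 ct tj by (simp add: e_def)
  have enot: "e \<noteq> {c i, c (Suc i)}" for i using cedge[of i] eE by auto
  define f where "f = fval c j e"
  have gi: "graphical_instance V E' f"
    unfolding graphical_instance_def
  proof (intro ballI conjI allI impI)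
    fix v X assume "X \<subseteq> E'" show "0 \<le> f v X" by (simp add: f_def fval_def)
  next
    fix v X Y assume "X \<subseteq> Y \<and> Y \<subseteq> E'"
    then show "f v X \<le> f v Y" by (auto simp: f_def fval_def)
  next
    fix v X assume X: "X \<subseteq> E'"
    show "f v X = f v (X \<inter> incident_edges E' v)"
    proof -
      have i1: "(\<exists>g\<in>X. g \<in> range (gE c) \<and> v \<in> g) \<longleftrightarrow>
                (\<exists>g\<in>X \<inter> incident_edges E' v. g \<in> range (gE c) \<and> v \<in> g)"
        using X by (auto simp: incident_edges_def)
      have i2: "(v = c 0 \<or> v = c (2*j)) \<and> e \<in> X \<longleftrightarrow>
                (v = c 0 \<or> v = c (2*j)) \<and> e \<in> X \<inter> incident_edges E' v"
        using X by (auto simp: incident_edges_def edef)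
      show ?thesis unfolding f_def fval_def using i1 i2 by presburger
    qed
  qed
  then obtain h where h: "EFX_orientation V E' f h"
    using strong unfolding strongly_EFX_orientable_def E'_def e_def by blast
  interpret core c K j V E' e h
  proof
    show "2 \<le> K" by (rule K2)
    show "c a = c b \<longleftrightarrow> int (2*K) dvd (int a - int b)" for a b using cinjL[of a b] LK by simp
    show "{c i, c (Suc i)} \<in> E'" for i using cedge[of i] by (simp add: E'_def)
    show "c i \<in> V" for i by (rule cV)
    show "e \<in> E'" by (simp add: E'_def)
    show "e = {c 0, c (2*j)}" by (rule edef)
    show "0 < j" "j < K" by (rule j(1), rule j(2))
    show "e \<noteq> {c i, c (Suc i)}" for i by (rule enot)
    show "EFX_orientation V E' (fval c j e) h" using h by (simp add: f_def)
  qed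
  show False by (rule contradiction)
qed


end
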